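(* Consider $n$ agents in the plane evolving according to the piecewise continuous-time dynamics described in the context, with blind-zone radius $\delta>0$. Let $i\neq j$ be two agents and let $t$ be a time with $d_{ij}(t)=\|p_i(t)-p_j(t)\|>\delta$ (the agents are "separated"). Then the distance between them does not increase at $t$: $\frac{d}{dt}d_{ij}(t)\le 0$.
   Context: Agents $1,\dots,n$ have positions $p_i(t)\in\mathbb{R}^2$. Fix $\delta>0$. For each integer $k\ge 0$ and each agent $i$, let $\chi^{(i)}_k$ be independent random variables, uniformly distributed on $[0,2\pi)$, and set the heading $\theta_i(t)=\chi^{(i)}_k$ for $t\in[k,k+1)$, with unit heading vector $\hat\theta_i(t)=(\cos\theta_i(t),\sin\theta_i(t))^\top$. The motion law is $\dot p_i(t)=\hat\theta_i(t)\,s_i(t)$, where $s_i(t)=0$ if there exists an agent $j$ with $d_{ij}(t)>\delta$ and $\hat\theta_i(t)^\top\big(p_j(t)-p_i(t)\big)\le 0$, and $s_i(t)=1$ otherwise. Here $d_{ij}(t)=\|p_i(t)-p_j(t)\|$. (That is, each agent moves forward with unit speed when its closed back half-plane, excluding a blind-zone half-disc of radius $\delta$, contains no other agent, and otherwise stays put.) The initial configuration $p_1(0),\dots,p_n(0)$ is arbitrary. *)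

theory Defs
  imports "HOL-Analysis.Analysis"
begin

definition heading :: "real \<Rightarrow> real^2" where
  "heading \<theta> = vector [cos \<theta>, sin \<theta>]"

text \<open>Heading of agent i at time t: theta_i(t) = chi^(i)_k for t in [k,k+1).\<close>
definition theta :: "(nat \<Rightarrow> nat \<Rightarrow> real) \<Rightarrow> nat \<Rightarrow> real \<Rightarrow> real" where
  "theta X i t = X i (nat \<lfloor>t\<rfloor>)"

definition speed :: "nat \<Rightarrow> real \<Rightarrow> (nat \<Rightarrow> real^2) \<Rightarrow> real \<Rightarrow> nat \<Rightarrow> real" where
  "speed n \<delta> P th i =
     (if \<exists>j<n. dist (P i) (P j) > \<delta> \<and> heading th \<bullet> (P j - P i) \<le> 0 then 0 else 1)"

end

theory Submission
  imports Defs
begin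

theorem lemma1:
  fixes n :: nat and \<delta> :: real and X :: "nat \<Rightarrow> nat \<Rightarrow> real"
    and p :: "nat \<Rightarrow> real \<Rightarrow> real^2" and i j :: nat and t :: real
  assumes delta_pos: "\<delta> > 0"
    and chi_range: "\<And>m k. X m k \<in> {0..<2*pi}"
    and motion: "\<And>m \<tau>. m < n \<Longrightarrow> \<tau> \<ge> 0 \<Longrightarrow>
       (p m has_vector_derivative
          (speed n \<delta> (\<lambda>l. p l \<tau>) (theta X m \<tau>) m *\<^sub>R heading (theta X m \<tau>)))
       (at \<tau> within {\<tau>..})"
    and ij: "i < n" "j < n" "i \<noteq> j"
    and t_nonneg: "t \<ge> 0"
    and separated: "dist (p i t) (p j t) > \<delta>"
  shows "\<exists>D. ((\<lambda>\<tau>. dist (p i \<tau>) (p j \<tau>)) has_real_derivative D) (at t within {t..}) \<and> D \<le> 0"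
proof -
  define vi where "vi = speed n \<delta> (\<lambda>l. p l t) (theta X i t) i *\<^sub>R heading (theta X i t)"
  define vj where "vj = speed n \<delta> (\<lambda>l. p l t) (theta X j t) j *\<^sub>R heading (theta X j t)"
  define w where "w = p i t - p j t"
  have di: "(p i has_vector_derivative vi) (at t within {t..})"
    using motion[OF ij(1) t_nonneg] unfolding vi_def .
  have dj: "(p j has_vector_derivative vj) (at t within {t..})"
    using motion[OF ij(2) t_nonneg] unfolding vj_def .
  have df: "((\<lambda>\<tau>. p i \<tau> - p j \<tau>) has_vector_derivative (vi - vj)) (at t within {t..})"
    using has_vector_derivative_diff[OF di dj] .
  have w0: "w \<noteq> 0" using separated delta_pos unfolding w_def by (auto simp: dist_norm)
  have dn: "(norm has_derivative (\<lambda>h. h \<bullet> sgn w)) (at w)"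
    using has_derivative_norm[OF w0] .
  have comp: "((\<lambda>\<tau>. norm (p i \<tau> - p j \<tau>)) has_derivative (\<lambda>h. (h *\<^sub>R (vi - vj)) \<bullet> sgn w)) (at t within {t..})"
    using has_derivative_compose[OF df[unfolded has_vector_derivative_def], of norm "\<lambda>h. h \<bullet> sgn w"] dn
    unfolding w_def by simp
  define D where "D = (vi - vj) \<bullet> sgn w"
  have deriv: "((\<lambda>\<tau>. dist (p i \<tau>) (p j \<tau>)) has_real_derivative D) (at t within {t..})"
  proof -
    have "((\<lambda>\<tau>. dist (p i \<tau>) (p j \<tau>)) has_derivative (\<lambda>h. h * D)) (at t within {t..})"
      using comp by (simp add: o_def dist_norm D_def inner_scaleR_left)
    moreover have "(\<lambda>h. h * D) = (*) D" by (rule ext) (simp add: mult.commute)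
    ultimately show ?thesis unfolding has_field_derivative_def by simp
  qed
  have hi: "vi \<bullet> w \<le> 0"
  proof (cases "speed n \<delta> (\<lambda>l. p l t) (theta X i t) i = 0")
    case True then show ?thesis by (simp add: vi_def)
  next
    case False
    then have "\<not> (dist (p i t) (p j t) > \<delta> \<and> heading (theta X i t) \<bullet> (p j t - p i t) \<le> 0)"
      using ij(2) unfolding speed_def by (auto split: if_splits)
    with separated have "heading (theta X i t) \<bullet> (p j t - p i t) > 0" by auto
    moreover have "speed n \<delta> (\<lambda>l. p l t) (theta X i t) i = 1"
      using False unfolding speed_def by (auto split: if_splits)
    ultimately show ?thesis unfolding vi_def w_def
      by (simp add: inner_diff_right)
  qed
  have hj: "vj \<bullet> w \<ge> 0"
  proof (cases "speed n \<delta> (\<lambda>l. p l t) (theta X j t) j = 0")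
    case True then show ?thesis by (simp add: vj_def)
  next
    case False
    then have "\<not> (dist (p j t) (p i t) > \<delta> \<and> heading (theta X j t) \<bullet> (p i t - p j t) \<le> 0)"
      using ij(1) unfolding speed_def by (auto split: if_splits)
    with separated have "heading (theta X j t) \<bullet> (p i t - p j t) > 0" by (auto simp: dist_commute)
    moreover have "speed n \<delta> (\<lambda>l. p l t) (theta X j t) j = 1"
      using False unfolding speed_def by (auto split: if_splits)
    ultimately show ?thesis unfolding vj_def w_def
      by (simp add: inner_diff_right)
  qed
  have "D \<le> 0"
  proof -
    have "D = ((vi - vj) \<bullet> w) / norm w" unfolding D_def sgn_div_norm
      by (simp add: inner_scaleR_right divide_inverse mult.commute)
    moreover have "(vi - vj) \<bullet> w \<le> 0" using hi hj by (simp add: inner_diff_left)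
    ultimately show ?thesis by (simp add: divide_nonpos_nonneg)
  qed
  with deriv show ?thesis by blast
qed

end
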